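(* In the binary sequential learning model described in the context, with information cascade threshold $k$, let $\tilde u(\varepsilon)=u(\varepsilon)(1-p)+p(1-u(\varepsilon))$ and $\rho(\varepsilon)=\frac{1-\tilde u(\varepsilon)}{\tilde u(\varepsilon)}$. If $\tilde u(\varepsilon)\neq\frac12$, the probability of a correct cascade is $$\mathbb{P}(\text{correct cascade})=\frac{\rho(\varepsilon)^k-1}{\rho(\varepsilon)^{2k}-1}.$$ If $\tilde u(\varepsilon)=\frac12$, an information cascade does not occur.
   Context: Binary model: unknown state $\theta\in\{-1,+1\}$ with uniform prior; agents $n=1,2,\dots$ act in sequence; agent $n$ privately observes $s_n\in\{-1,+1\}$, i.i.d. given $\theta$ with $\mathbb{P}(s_n=\theta\mid\theta)=p\in(1/2,1)$. Before a cascade, agent $n$'s intended action equals her signal and she publicly reports $x_n=a_n$ with probability $1-u(\varepsilon)$ and $x_n=-a_n$ with probability $u(\varepsilon)=\frac{1}{1+e^{\varepsilon}}$, where $\varepsilon>0$ is the privacy budget. The information cascade threshold is $k=\lfloor\log_{\rho(\varepsilon)}\frac{1-p}{p}\rfloor+1$. An information cascade starts at the first agent whose history has (number of $+1$ reports) $-$ (number of $-1$ reports) equal to $\pm k$; from then on all agents take and truthfully report the action favored by the history. It is a correct cascade if that action equals $\theta$. *)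

theory Defs
  imports "HOL-Probability.Probability"
begin

definition u_priv :: "real \<Rightarrow> real" where
  "u_priv \<epsilon> = 1 / (1 + exp \<epsilon>)"

text \<open>Probability that a pre-cascade report equals the true state.\<close>
definition u_tilde :: "real \<Rightarrow> real \<Rightarrow> real" where
  "u_tilde p \<epsilon> = u_priv \<epsilon> * (1 - p) + p * (1 - u_priv \<epsilon>)"

definition rho :: "real \<Rightarrow> real \<Rightarrow> real" where
  "rho p \<epsilon> = (1 - u_tilde p \<epsilon>) / u_tilde p \<epsilon>"

definition threshold :: "real \<Rightarrow> real \<Rightarrow> nat" where
  "threshold p \<epsilon> = nat (\<lfloor>log (rho p \<epsilon>) ((1 - p) / p)\<rfloor> + 1)"

text \<open>Joint law of the state theta (uniform on {-1,1}) and, for each agent n,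
  a pair (c_n, f_n): c_n = True iff the private signal equals theta (prob p),
  f_n = True iff the privacy mechanism flips the report (prob u(eps)).\<close>
definition model :: "real \<Rightarrow> real \<Rightarrow> (int \<times> (bool \<times> bool) stream) measure" where
  "model p \<epsilon> = measure_pmf (pmf_of_set {-1::int, 1}) \<Otimes>\<^sub>M
     stream_space (measure_pmf (pair_pmf (bernoulli_pmf p) (bernoulli_pmf (u_priv \<epsilon>))))"

definition signal :: "int \<Rightarrow> (bool \<times> bool) stream \<Rightarrow> nat \<Rightarrow> int" where
  "signal \<theta> \<omega> n = (if fst (\<omega> !! n) then \<theta> else - \<theta>)"

text \<open>Public report before a cascade: intended action = signal, flipped w.p. u.\<close>
definition report :: "int \<Rightarrow> (bool \<times> bool) stream \<Rightarrow> nat \<Rightarrow> int" where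
  "report \<theta> \<omega> n = (if snd (\<omega> !! n) then - signal \<theta> \<omega> n else signal \<theta> \<omega> n)"

text \<open>(#(+1) reports) - (#(-1) reports) in the history of the agent with
  0-based index n, i.e. over the reports of agents 0..n-1 (all pre-cascade
  as long as no earlier history reached +-k).\<close>
definition hist_diff :: "int \<Rightarrow> (bool \<times> bool) stream \<Rightarrow> nat \<Rightarrow> int" where
  "hist_diff \<theta> \<omega> n = (\<Sum>i<n. report \<theta> \<omega> i)"

definition cascade_starts :: "nat \<Rightarrow> int \<Rightarrow> (bool \<times> bool) stream \<Rightarrow> nat \<Rightarrow> bool" where
  "cascade_starts k \<theta> \<omega> n \<longleftrightarrow>
     \<bar>hist_diff \<theta> \<omega> n\<bar> = int k \<and> (\<forall>m<n. \<bar>hist_diff \<theta> \<omega> m\<bar> \<noteq> int k)"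

definition cascade_occurs :: "nat \<Rightarrow> int \<times> (bool \<times> bool) stream \<Rightarrow> bool" where
  "cascade_occurs k x \<longleftrightarrow> (\<exists>n. cascade_starts k (fst x) (snd x) n)"

definition correct_cascade :: "nat \<Rightarrow> int \<times> (bool \<times> bool) stream \<Rightarrow> bool" where
  "correct_cascade k x \<longleftrightarrow>
     (\<exists>n. cascade_starts k (fst x) (snd x) n \<and> hist_diff (fst x) (snd x) n = int k * fst x)"

end

theory Submission
  imports Defs
begin


definition st :: "bool \<times> bool \<Rightarrow> int" where
  "st y = (if fst y \<noteq> snd y then 1 else -1)"

definition S :: "(bool \<times> bool) stream \<Rightarrow> nat \<Rightarrow> int" where
  "S \<omega> n = (\<Sum>i<n. st (\<omega> !! i))"

lemma hist_diff_S: "hist_diff \<theta> \<omega> n = \<theta> * S \<omega> n"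
  unfolding hist_diff_def S_def report_def signal_def st_def
  by (auto simp: sum_distrib_left intro!: sum.cong)

lemma S_meas: "(\<lambda>\<omega>. S \<omega> n) \<in> measurable (stream_space (measure_pmf P)) (count_space UNIV)"
proof -
  have "(\<lambda>\<omega>. S \<omega> n) = (\<lambda>xs. \<Sum>i<n. st (xs ! i)) \<circ> stake n"
    by (auto simp: S_def fun_eq_iff intro!: sum.cong)
  moreover have "stake n \<in> measurable (stream_space (measure_pmf P)) (count_space UNIV)"
  proof -
    have "sets (stream_space (measure_pmf P)) = sets (stream_space (count_space UNIV))"
      by (rule sets_stream_space_cong) simp
    then show ?thesis
      using measurable_stake[of n] measurable_cong_sets[of "stream_space (measure_pmf P)" "stream_space (count_space UNIV)" "count_space UNIV" "count_space UNIV"]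
      by simp
  qed
  ultimately show ?thesis by simp
qed

lemma pred_S: "Measurable.pred (stream_space (measure_pmf P)) (\<lambda>\<omega>. Q (S \<omega> n))"
  using measurable_compose[OF S_meas, of Q "count_space UNIV"] by (simp add: comp_def)

definition H :: "int \<Rightarrow> int \<Rightarrow> (bool \<times> bool) stream \<Rightarrow> bool" where
  "H K j \<omega> \<longleftrightarrow> (\<exists>n. \<bar>j + S \<omega> n\<bar> = K \<and> (\<forall>m<n. \<bar>j + S \<omega> m\<bar> \<noteq> K) \<and> j + S \<omega> n = K)"

lemma S_0[simp]: "S \<omega> 0 = 0" by (simp add: S_def)
lemma S_Suc_Stream: "S (x ## \<omega>) (Suc n) = st x + S \<omega> n"
  unfolding S_def sum.lessThan_Suc_shift by simp

lemma H_shift: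
  assumes "\<bar>j\<bar> \<noteq> K"
  shows "H K j (x ## \<omega>) \<longleftrightarrow> H K (j + st x) \<omega>"
proof -
  have a: "(\<forall>m<Suc n. \<bar>j + S (x ## \<omega>) m\<bar> \<noteq> K) \<longleftrightarrow> (\<forall>m<n. \<bar>j + st x + S \<omega> m\<bar> \<noteq> K)" for n
  proof
    assume h: "\<forall>m<Suc n. \<bar>j + S (x ## \<omega>) m\<bar> \<noteq> K"
    show "\<forall>m<n. \<bar>j + st x + S \<omega> m\<bar> \<noteq> K"
    proof (intro allI impI)
      fix m assume "m < n"
      then show "\<bar>j + st x + S \<omega> m\<bar> \<noteq> K" using h[rule_format, of "Suc m"] by (simp add: S_Suc_Stream add.assoc)
    qed
  next
    assume h: "\<forall>m<n. \<bar>j + st x + S \<omega> m\<bar> \<noteq> K"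
    show "\<forall>m<Suc n. \<bar>j + S (x ## \<omega>) m\<bar> \<noteq> K"
    proof (intro allI impI)
      fix m assume m: "m < Suc n"
      show "\<bar>j + S (x ## \<omega>) m\<bar> \<noteq> K"
      proof (cases m)
        case 0 then show ?thesis using assms by simp
      next
        case (Suc m') then show ?thesis using h[rule_format, of m'] m by (simp add: S_Suc_Stream add.assoc)
      qed
    qed
  qed
  show ?thesis
  proof
    assume "H K j (x ## \<omega>)"
    then obtain n where n: "\<bar>j + S (x ## \<omega>) n\<bar> = K" "\<forall>m<n. \<bar>j + S (x ## \<omega>) m\<bar> \<noteq> K" "j + S (x ## \<omega>) n = K"
      unfolding H_def by (elim exE conjE) (rule that)
    then obtain n' where n': "n = Suc n'" using assms by (cases n) auto
    show "H K (j + st x) \<omega>" unfolding H_def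
      using n a[of n'] unfolding n' by (intro exI[of _ n']) (simp add: S_Suc_Stream add.assoc)
  next
    assume "H K (j + st x) \<omega>"
    then obtain n where n: "\<bar>j + st x + S \<omega> n\<bar> = K" "\<forall>m<n. \<bar>j + st x + S \<omega> m\<bar> \<noteq> K" "j + st x + S \<omega> n = K"
      unfolding H_def by (elim exE conjE) (rule that)
    show "H K j (x ## \<omega>)" unfolding H_def
      using n a[of n] by (intro exI[of _ "Suc n"]) (simp add: S_Suc_Stream add.assoc)
  qed
qed

lemma H_top: "K \<ge> 0 \<Longrightarrow> H K K \<omega>"
  unfolding H_def by (rule exI[of _ 0]) simp

lemma H_bot: "K > 0 \<Longrightarrow> \<not> H K (-K) \<omega>"
  unfolding H_def
proof clarify
  fix n assume K: "K > 0" and h: "\<bar>- K + S \<omega> n\<bar> = K" "\<forall>m<n. \<bar>- K + S \<omega> m\<bar> \<noteq> K" "- K + S \<omega> n = K"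
  show False
  proof (cases "n = 0")
    case True then show ?thesis using h K by simp
  next
    case False then show ?thesis using h(2)[rule_format, of 0] K by simp
  qed
qed

lemma pred_first_hit:
  "Measurable.pred (stream_space (measure_pmf P))
     (\<lambda>\<omega>. \<exists>n. A (S \<omega> n) \<and> (\<forall>m<n. B (S \<omega> m)) \<and> C (S \<omega> n))"
  apply (rule pred_intros_countable)
  apply (rule pred_intros_logic)
  apply (rule pred_S)
  apply (rule pred_intros_logic)
  apply (rule pred_intros_countable)
  apply (rule pred_intros_logic)
  apply (rule measurable_const)
  apply simp
  apply (rule pred_S)
  apply (rule pred_S)
  done

lemma pred_H: "Measurable.pred (stream_space (measure_pmf P)) (H K j)"
  unfolding H_def
  using pred_first_hit[where P=P and A="\<lambda>s. \<bar>j + s\<bar> = K" and B="\<lambda>s. \<bar>j + s\<bar> \<noteq> K" and C="\<lambda>s. j + s = K"]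
  by simp

lemma cc_eq:
  assumes "\<theta> \<in> {-1, 1}" "k > 0"
  shows "correct_cascade k (\<theta>, \<omega>) \<longleftrightarrow> H (int k) 0 \<omega>"
  using assms unfolding correct_cascade_def cascade_starts_def H_def hist_diff_S
  by (auto simp: abs_mult) (metis of_nat_0_le_iff abs_of_nonneg)+

lemma pred_cc: "Measurable.pred (measure_pmf M \<Otimes>\<^sub>M stream_space (measure_pmf P)) (correct_cascade k)"
proof -
  have eq: "correct_cascade k = (\<lambda>x. \<exists>t::int. fst x = t \<and> correct_cascade k (t, snd x))"
    by (rule ext) (metis prod.collapse)
  have m: "Measurable.pred (stream_space (measure_pmf P)) (\<lambda>\<omega>. correct_cascade k (t, \<omega>))" for t
    unfolding correct_cascade_def cascade_starts_def hist_diff_S fst_conv snd_conv conj_assoc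
    by (rule pred_first_hit[where P=P and A="\<lambda>s. \<bar>t * s\<bar> = int k" and B="\<lambda>s. \<bar>t * s\<bar> \<noteq> int k" and C="\<lambda>s. t * s = int k * t"])
  have m1: "Measurable.pred (measure_pmf M \<Otimes>\<^sub>M stream_space (measure_pmf P)) (\<lambda>x. fst x = t)" for t
  proof -
    have "(\<lambda>\<theta>. \<theta> = t) \<in> measurable (measure_pmf M) (count_space UNIV)" by simp
    from measurable_compose[OF measurable_fst[of "measure_pmf M" "stream_space (measure_pmf P)"] this] show ?thesis by (simp only: comp_def)
  qed
  have m2: "Measurable.pred (measure_pmf M \<Otimes>\<^sub>M stream_space (measure_pmf P)) (\<lambda>x. correct_cascade k (t, snd x))" for t
    using measurable_compose[OF measurable_snd[of "measure_pmf M" "stream_space (measure_pmf P)"] m[of t]] by (simp only: comp_def)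
  show ?thesis
    apply (subst eq)
    apply (rule pred_intros_countable)
    apply (rule pred_intros_logic)
     apply (rule m1)
    apply (rule m2)
    done
qed




lemma ut_le1:
  fixes p b :: real
  assumes "0 \<le> p" "p \<le> 1" "0 \<le> b" "b \<le> 1"
  shows "b * (1 - p) + p * (1 - b) \<le> 1"
proof -
  have h1: "0 \<le> (1-b)*(1-p)" "0 \<le> b*p" using assms by simp_all
  then show ?thesis by (simp add: algebra_simps)
qed

lemma rec_step:
  fixes p b :: real and K j :: int
  assumes p: "0 \<le> p" "p \<le> 1" and b: "0 \<le> b" "b \<le> 1" and j: "\<bar>j\<bar> \<noteq> K"
  defines "N \<equiv> stream_space (measure_pmf (pair_pmf (bernoulli_pmf p) (bernoulli_pmf b)))"
  defines "f \<equiv> \<lambda>i. measure N {x \<in> space N. H K i x}"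
  shows "f j = (b * (1 - p) + p * (1 - b)) * f (j + 1) + (1 - (b * (1 - p) + p * (1 - b))) * f (j - 1)"
proof -
  let ?D = "measure_pmf (pair_pmf (bernoulli_pmf p) (bernoulli_pmf b))"
  interpret D: prob_space ?D by (rule prob_space_measure_pmf)
  interpret N: prob_space N unfolding N_def by (rule prob_space.prob_space_stream_space) (rule prob_space_measure_pmf)
  have sp: "space N = UNIV" unfolding N_def by (simp add: space_stream_space)
  have meas: "{x \<in> space N. H K i x} \<in> sets N" for i
    unfolding N_def using pred_H by (simp add: pred_def)
  have "ennreal (f j) = emeasure N {x \<in> space N. H K j x}"
    unfolding f_def by (simp add: N.emeasure_eq_measure)
  also have "\<dots> = (\<integral>\<^sup>+t. emeasure N {x\<in>space N. t ## x \<in> {x \<in> space N. H K j x}} \<partial>?D)"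
    unfolding N_def by (rule prob_space.emeasure_stream_space[OF prob_space_measure_pmf]) (use meas N_def in simp)
  also have "\<dots> = (\<integral>\<^sup>+t. ennreal (f (j + st t)) \<partial>?D)"
    by (intro nn_integral_cong) (simp add: sp H_shift[OF j] f_def N.emeasure_eq_measure)
  also have "\<dots> = ennreal ((b * (1 - p) + p * (1 - b)) * f (j + 1) + (1 - (b * (1 - p) + p * (1 - b))) * f (j - 1))"
  proof -
    have fn: "\<And>i. 0 \<le> f i" by (simp add: f_def)
    have e: "(b * (1 - p) + p * (1 - b)) * f (j + 1) + (1 - (b * (1 - p) + p * (1 - b))) * f (j - 1)
       = (f (j - 1) * b + f (j + 1) * (1 - b)) * p + (f (j + 1) * b + f (j - 1) * (1 - b)) * (1 - p)"
      by (simp add: algebra_simps)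
    show ?thesis
      unfolding e using p b fn
      by (simp add: nn_integral_pair_pmf' st_def ennreal_plus ennreal_mult mult_nonneg_nonneg add_nonneg_nonneg)
  qed
  finally have fin: "ennreal (f j) = ennreal ((b * (1 - p) + p * (1 - b)) * f (j + 1) + (1 - (b * (1 - p) + p * (1 - b))) * f (j - 1))" .
  have ut: "b * (1 - p) + p * (1 - b) \<le> 1" by (rule ut_le1[OF p b])
  have nn: "0 \<le> (b * (1 - p) + p * (1 - b)) * f (j + 1) + (1 - (b * (1 - p) + p * (1 - b))) * f (j - 1)"
    using p b ut by (auto simp: f_def intro!: add_nonneg_nonneg mult_nonneg_nonneg)
  show ?thesis using fin nn by (simp add: f_def)
qed



lemma solve_rec:
  fixes f :: "int \<Rightarrow> real" and q r :: real and k :: nat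
  assumes k: "k > 0" and q: "0 < q" and qr: "q * r = 1 - q" and r: "0 < r" "r < 1"
    and bot: "f (- int k) = 0" and top: "f (int k) = 1"
    and rec: "\<And>j. \<bar>j\<bar> < int k \<Longrightarrow> f j = q * f (j + 1) + (1 - q) * f (j - 1)"
  shows "f 0 = (r ^ k - 1) / (r ^ (2 * k) - 1)"
proof -
  define a where "a i = f (int i - int k)" for i :: nat
  have step: "Suc (Suc i) \<le> 2 * k \<Longrightarrow> a (Suc i) = q * a (Suc (Suc i)) + (1 - q) * a i" for i
  proof -
    assume i: "Suc (Suc i) \<le> 2 * k"
    have "\<bar>int (Suc i) - int k\<bar> < int k" using i by auto
    from rec[OF this] show ?thesis unfolding a_def
      by (simp add: algebra_simps)
  qed
  have P: "Suc i \<le> 2 * k \<longrightarrow> a i * (1 - r) = a 1 * (1 - r ^ i) \<and> a (Suc i) * (1 - r) = a 1 * (1 - r ^ Suc i)" for i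
  proof (induction i)
    case 0
    show ?case using bot by (simp add: a_def)
  next
    case (Suc i)
    show ?case
    proof
      assume i: "Suc (Suc i) \<le> 2 * k"
      then have IH: "a i * (1 - r) = a 1 * (1 - r ^ i)" "a (Suc i) * (1 - r) = a 1 * (1 - r ^ Suc i)"
        using Suc.IH by auto
      have s: "q * a (Suc (Suc i)) = a (Suc i) - (1 - q) * a i" using step[OF i] by simp
      have "q * (a (Suc (Suc i)) * (1 - r)) = (q * a (Suc (Suc i))) * (1 - r)"
        by (simp add: algebra_simps)
      also have "\<dots> = (a (Suc i) - (1 - q) * a i) * (1 - r)" using s by simp
      also have "\<dots> = a (Suc i) * (1 - r) - (1 - q) * (a i * (1 - r))"
        by (simp add: algebra_simps)
      also have "\<dots> = a 1 * (1 - r ^ Suc i) - q * r * (a 1 * (1 - r ^ i))"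
        using IH qr by simp
      also have "\<dots> = q * (a 1 * (1 - r ^ Suc (Suc i))) + a 1 * ((1 - q - q * r) * (1 - r ^ Suc i))"
        by (simp add: algebra_simps)
      also have "\<dots> = q * (a 1 * (1 - r ^ Suc (Suc i)))"
        using qr by simp
      finally have "a (Suc (Suc i)) * (1 - r) = a 1 * (1 - r ^ Suc (Suc i))"
        using q by simp
      then show "a (Suc i) * (1 - r) = a 1 * (1 - r ^ Suc i) \<and> a (Suc (Suc i)) * (1 - r) = a 1 * (1 - r ^ Suc (Suc i))"
        using IH by simp
    qed
  qed
  have P': "i \<le> 2 * k \<Longrightarrow> a i * (1 - r) = a 1 * (1 - r ^ i)" for i
  proof (cases i)
    case 0 then show ?thesis using bot by (simp add: a_def)
  next
    case (Suc i')
    assume "i \<le> 2 * k"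
    then show ?thesis using P[of i'] Suc by simp
  qed
  have A: "1 - r = a 1 * (1 - r ^ (2 * k))"
    using P'[of "2 * k"] top by (simp add: a_def)
  have B: "f 0 * (1 - r) = a 1 * (1 - r ^ k)"
    using P'[of k] by (simp add: a_def)
  have rk: "r ^ (2 * k) < 1" using r k by (simp add: power_less_one_iff)
  have a1: "a 1 = (1 - r) / (1 - r ^ (2 * k))" using A rk by (simp add: field_simps)
  have eqn: "f 0 * (1 - r) = ((1 - r ^ k) / (1 - r ^ (2 * k))) * (1 - r)"
    using B unfolding a1 by simp
  have ne: "1 - r \<noteq> 0" using r by simp
  have "f 0 = (1 - r ^ k) / (1 - r ^ (2 * k))"
    by (rule mult_right_cancel[OF ne, THEN iffD1, OF eqn])
  also have "\<dots> = (r ^ k - 1) / (r ^ (2 * k) - 1)"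
    by (metis minus_diff_eq minus_divide_divide)
  finally show ?thesis .
qed



lemma meas_model:
  assumes k: "k > 0"
  shows "measure (measure_pmf (pmf_of_set {-1::int, 1}) \<Otimes>\<^sub>M stream_space (measure_pmf P))
           {x \<in> space (measure_pmf (pmf_of_set {-1::int, 1}) \<Otimes>\<^sub>M stream_space (measure_pmf P)). correct_cascade k x}
       = measure (stream_space (measure_pmf P)) {x \<in> space (stream_space (measure_pmf P)). H (int k) 0 x}"
proof -
  let ?M = "measure_pmf (pmf_of_set {-1::int, 1})"
  let ?N = "stream_space (measure_pmf P)"
  let ?A = "{x \<in> space (?M \<Otimes>\<^sub>M ?N). correct_cascade k x}"
  interpret N: prob_space ?N by (rule prob_space.prob_space_stream_space) (rule prob_space_measure_pmf)
  have spN: "space ?N = UNIV" by (simp add: space_stream_space)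
  have A: "?A \<in> sets (?M \<Otimes>\<^sub>M ?N)" using pred_cc[where M="pmf_of_set {-1::int, 1}" and P=P and k=k] by (simp add: pred_def)
  have "emeasure (?M \<Otimes>\<^sub>M ?N) ?A = (\<integral>\<^sup>+\<theta>. emeasure ?N (Pair \<theta> -` ?A) \<partial>?M)"
    by (rule N.emeasure_pair_measure_alt[OF A])
  also have "\<dots> = (\<integral>\<^sup>+\<theta>. emeasure ?N {x \<in> space ?N. H (int k) 0 x} \<partial>?M)"
  proof (rule nn_integral_cong_AE)
    show "AE \<theta> in ?M. emeasure ?N (Pair \<theta> -` ?A) = emeasure ?N {x \<in> space ?N. H (int k) 0 x}"
    proof (subst AE_measure_pmf_iff, intro ballI)
      fix \<theta> assume "\<theta> \<in> set_pmf (pmf_of_set {-1::int, 1})"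
      then have t: "\<theta> \<in> {-1, 1}" by simp
      have "Pair \<theta> -` ?A = {x \<in> space ?N. H (int k) 0 x}"
        using cc_eq[OF t k] by (auto simp: space_pair_measure spN)
      then show "emeasure ?N (Pair \<theta> -` ?A) = emeasure ?N {x \<in> space ?N. H (int k) 0 x}" by simp
    qed
  qed
  also have "\<dots> = emeasure ?N {x \<in> space ?N. H (int k) 0 x}"
    by (simp add: measure_pmf.emeasure_space_1)
  finally show ?thesis by (simp add: measure_def)
qed


theorem lemma2:
  fixes p \<epsilon> :: real
  assumes "1/2 < p" and "p < 1" and "0 < \<epsilon>"
  shows "(u_tilde p \<epsilon> \<noteq> 1/2 \<longrightarrow>
           measure (model p \<epsilon>)
             {x \<in> space (model p \<epsilon>). correct_cascade (threshold p \<epsilon>) x}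
           = (rho p \<epsilon> ^ threshold p \<epsilon> - 1) / (rho p \<epsilon> ^ (2 * threshold p \<epsilon>) - 1))
       \<and> (u_tilde p \<epsilon> = 1/2 \<longrightarrow>
           measure (model p \<epsilon>)
             {x \<in> space (model p \<epsilon>). cascade_occurs (threshold p \<epsilon>) x} = 0)"
proof -
  define u where "u = u_priv \<epsilon>"
  have ex: "1 < exp \<epsilon>" using assms(3) by simp
  have u0: "0 < u" unfolding u_def u_priv_def by (simp add: add_pos_pos)
  have u1: "u < 1/2"
  proof -
    have d: "0 < 1 + exp \<epsilon>" by (simp add: add_pos_pos)
    have "2 < 1 + exp \<epsilon>" using ex by simp
    then show ?thesis unfolding u_def u_priv_def using d by (simp add: divide_less_eq)
  qed
  define q where "q = u_tilde p \<epsilon>"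
  have q_eq: "q = u * (1 - p) + p * (1 - u)" by (simp add: q_def u_def u_tilde_def)
  have "q - 1/2 = (2 * p - 1) * (1/2 - u)" unfolding q_eq by (simp add: algebra_simps)
  moreover have "0 < (2 * p - 1) * (1/2 - u)" using assms(1) u1 by (intro mult_pos_pos) auto
  ultimately have q_gt: "1/2 < q" by linarith
  have "q = p - u * (2 * p - 1)" unfolding q_eq by (simp add: algebra_simps)
  moreover have "0 < u * (2 * p - 1)" using assms(1) u0 by (intro mult_pos_pos) auto
  ultimately have q_lt: "q < 1" using assms(2) by linarith
  define r where "r = rho p \<epsilon>"
  have r_eq: "r = (1 - q) / q" by (simp add: r_def rho_def q_def)
  have r0: "0 < r" unfolding r_eq using q_gt q_lt by simp
  have r1: "r < 1" unfolding r_eq using q_gt q_lt by (simp add: field_simps)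
  have qr: "q * r = 1 - q" unfolding r_eq using q_gt by simp
  define k where "k = threshold p \<epsilon>"
  have x0: "0 < (1 - p) / p" "(1 - p) / p < 1" using assms(1,2) by (simp_all add: field_simps)
  have "0 < log r ((1 - p) / p)"
    unfolding log_def using x0 r0 r1 by (intro divide_neg_neg) simp_all
  then have k0: "0 < k" unfolding k_def threshold_def r_def by simp
  let ?D = "measure_pmf (pair_pmf (bernoulli_pmf p) (bernoulli_pmf u))"
  let ?N = "stream_space ?D"
  interpret N: prob_space ?N by (rule prob_space.prob_space_stream_space) (rule prob_space_measure_pmf)
  define f where "f i = measure ?N {x \<in> space ?N. H (int k) i x}" for i
  have bot: "f (- int k) = 0" unfolding f_def using H_bot[of "int k"] k0 by simp
  have top: "f (int k) = 1" unfolding f_def using H_top[of "int k"] by (simp add: N.prob_space)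
  have rec: "f j = q * f (j + 1) + (1 - q) * f (j - 1)" if "\<bar>j\<bar> < int k" for j
    unfolding f_def q_eq
    by (rule rec_step) (use assms u0 u1 that in auto)
  have f0: "f 0 = (r ^ k - 1) / (r ^ (2 * k) - 1)"
    by (rule solve_rec[OF k0 _ qr r0 r1 bot top rec]) (use q_gt in auto)
  have model: "model p \<epsilon> = measure_pmf (pmf_of_set {-1::int, 1}) \<Otimes>\<^sub>M ?N"
    by (simp add: model_def u_def)
  have "measure (model p \<epsilon>) {x \<in> space (model p \<epsilon>). correct_cascade k x} = f 0"
    unfolding model f_def by (rule meas_model[OF k0])
  then have c1: "measure (model p \<epsilon>) {x \<in> space (model p \<epsilon>). correct_cascade (threshold p \<epsilon>) x}
           = (rho p \<epsilon> ^ threshold p \<epsilon> - 1) / (rho p \<epsilon> ^ (2 * threshold p \<epsilon>) - 1)"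
    using f0 by (simp add: k_def r_def)
  have "u_tilde p \<epsilon> \<noteq> 1/2" using q_gt by (simp add: q_def)
  then show ?thesis using c1 by simp
qed


end
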